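(* Let $n\ge2$ be an integer. The number of pairs of disjoint matrices in $\Sigma_{n^2}$ equals the number of pairs of disjoint matrices in $\Pi_n$.
   Context: $\Sigma_{n^2}$ is the set of all $n^2\times n^2$ permutation matrices (binary matrices with exactly one 1 in every row and every column) which, when partitioned into an $n\times n$ array of $n\times n$ blocks, have exactly one entry equal to 1 in each block; $A=[a_{ij}],B=[b_{ij}]\in\Sigma_{n^2}$ are disjoint if there are no $i,j$ with $a_{ij}=b_{ij}=1$. $\Pi_n$ is the set of all $n\times n$ matrices whose entries are ordered pairs $\langle a,b\rangle$ with $a,b\in\{1,\dots,n\}$ such that in every row the first components, read in order, form a permutation of $\{1,\dots,n\}$, and in every column the second components, read in order, form a permutation of $\{1,\dots,n\}$; $\pi'=[p'_{ij}],\pi''=[p''_{ij}]\in\Pi_n$ are disjoint if $p'_{ij}\ne p''_{ij}$ for all $i,j$. *)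

theory Defs
  imports Main
begin

text \<open>Matrices are indexed from 0. An N x N binary matrix is a function
  nat => nat => bool (True meaning entry 1), required to be False outside
  the index range {0..<N} x {0..<N} so that the set of matrices is finite.\<close>

definition perm_matrix :: "nat \<Rightarrow> (nat \<Rightarrow> nat \<Rightarrow> bool) \<Rightarrow> bool" where
  "perm_matrix N A \<longleftrightarrow>
     (\<forall>i j. A i j \<longrightarrow> i < N \<and> j < N) \<and>
     (\<forall>i<N. \<exists>!j. j < N \<and> A i j) \<and>
     (\<forall>j<N. \<exists>!i. i < N \<and> A i j)"

definition Sigma_sq :: "nat \<Rightarrow> (nat \<Rightarrow> nat \<Rightarrow> bool) set" where
  "Sigma_sq n = {A. perm_matrix (n^2) A \<and>
     (\<forall>I<n. \<forall>J<n. \<exists>!p. fst p \<in> {I*n..<I*n+n} \<and> snd p \<in> {J*n..<J*n+n}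
                        \<and> A (fst p) (snd p))}"

definition disjoint_Sigma :: "(nat \<Rightarrow> nat \<Rightarrow> bool) \<Rightarrow> (nat \<Rightarrow> nat \<Rightarrow> bool) \<Rightarrow> bool" where
  "disjoint_Sigma A B \<longleftrightarrow> (\<nexists>i j. A i j \<and> B i j)"

definition Pi_set :: "nat \<Rightarrow> (nat \<Rightarrow> nat \<Rightarrow> nat \<times> nat) set" where
  "Pi_set n = {P. (\<forall>i j. \<not> (i < n \<and> j < n) \<longrightarrow> P i j = (0, 0)) \<and>
     (\<forall>i<n. \<forall>j<n. fst (P i j) \<in> {1..n} \<and> snd (P i j) \<in> {1..n}) \<and>
     (\<forall>i<n. bij_betw (\<lambda>j. fst (P i j)) {0..<n} {1..n}) \<and>
     (\<forall>j<n. bij_betw (\<lambda>i. snd (P i j)) {0..<n} {1..n})}"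

definition disjoint_Pi :: "nat \<Rightarrow> (nat \<Rightarrow> nat \<Rightarrow> nat \<times> nat) \<Rightarrow> (nat \<Rightarrow> nat \<Rightarrow> nat \<times> nat) \<Rightarrow> bool" where
  "disjoint_Pi n P Q \<longleftrightarrow> (\<forall>i<n. \<forall>j<n. P i j \<noteq> Q i j)"

end

theory Submission
  imports Defs
begin

definition toS :: "nat \<Rightarrow> (nat \<Rightarrow> nat \<Rightarrow> nat \<times> nat) \<Rightarrow> nat \<Rightarrow> nat \<Rightarrow> bool" where
  "toS n P i j = (i < n^2 \<and> j < n^2 \<and> P (i div n) (j div n) = (i mod n + 1, j mod n + 1))"

lemma dm: "I < n \<Longrightarrow> a < (n::nat) \<Longrightarrow> (I*n+a) div n = I \<and> (I*n+a) mod n = a \<and> I*n+a < n^2"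
proof -
  assume a: "I < n" "a < n"
  have "I*n + a < I*n + n" using a by simp
  also have "\<dots> = (I+1)*n" by simp
  also have "\<dots> \<le> n*n" using a by (intro mult_right_mono) auto
  finally show ?thesis using a by (simp add: power2_eq_square)
qed

lemma dm2: "i < (n::nat)^2 \<Longrightarrow> i = (i div n)*n + i mod n \<and> i div n < n \<and> i mod n < n"
proof -
  assume a: "i < n^2"
  then have np: "n > 0" by (cases n) auto
  have "i div n < n" using a by (simp add: power2_eq_square less_mult_imp_div_less)
  then show ?thesis using np by simp
qed

lemma blk: "x \<in> {I*n..<I*n+(n::nat)} \<Longrightarrow> x div n = I \<and> x = I*n + x mod n \<and> x mod n < n"
proof -
  assume a: "x \<in> {I*n..<I*n+n}"
  define d where "d = x - I*n"
  have x: "x = I*n + d" "d < n" using a by (auto simp: d_def)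
  have "(I*n + d) mod n = d" "(I*n+d) div n = I" using x(2) by auto
  then show ?thesis using x by simp
qed

lemma toS_char: "I < n \<Longrightarrow> a < n \<Longrightarrow> J < n \<Longrightarrow> b < n \<Longrightarrow>
  toS n P (I*n+a) (J*n+b) \<longleftrightarrow> P I J = (a+1, b+1)"
  using dm[of I n a] dm[of J n b] by (simp add: toS_def)

lemma bij_card: "inj_on f {0..<n} \<Longrightarrow> f ` {0..<n} \<subseteq> {1..(n::nat)} \<Longrightarrow> bij_betw f {0..<n} {1..n}"
  unfolding bij_betw_def
  by (metis card_atLeastAtMost card_atLeastLessThan card_image card_subset_eq diff_Suc_1 finite_atLeastAtMost diff_zero)

lemma Pi_facts:
  assumes "P \<in> Pi_set n" "I < n" "J < n"
  shows "P I J = (fst (P I J) - 1 + 1, snd (P I J) - 1 + 1) \<and> fst (P I J) - 1 < n \<and> snd (P I J) - 1 < n"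
proof -
  have "fst (P I J) \<in> {1..n}" "snd (P I J) \<in> {1..n}" using assms unfolding Pi_set_def by auto
  then show ?thesis by (cases "P I J") auto
qed

lemma toS_rng: "toS n P i j \<Longrightarrow> i < n^2 \<and> j < n^2"
  by (simp add: toS_def)

lemma toS_row:
  assumes P: "P \<in> Pi_set n" and i: "i < n^2"
  shows "\<exists>!j. j < n^2 \<and> toS n P i j"
proof -
  define I where "I = i div n"
  define a where "a = i mod n"
  have Ia: "I < n" "a < n" "i = I*n+a" using dm2[OF i] by (auto simp: I_def a_def)
  have bj: "bij_betw (\<lambda>j. fst (P I j)) {0..<n} {1..n}" using P Ia unfolding Pi_set_def by auto
  then obtain J where J: "J < n" "fst (P I J) = a+1" using Ia
  proof -
    have "a+1 \<in> {1..n}" using Ia by auto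
    then have "a+1 \<in> (\<lambda>j. fst (P I j)) ` {0..<n}" using bj unfolding bij_betw_def by simp
    then show ?thesis using that by auto
  qed
  define b where "b = snd (P I J) - 1"
  have b: "b < n" "P I J = (a+1, b+1)" using Pi_facts[OF P Ia(1) J(1)] J by (auto simp: b_def)
  show ?thesis
  proof (rule ex1I[of _ "J*n+b"])
    show "J*n+b < n^2 \<and> toS n P i (J*n+b)" using toS_char[OF Ia(1,2) J(1) b(1)] b dm[OF J(1) b(1)] Ia by simp
  next
    fix j assume j: "j < n^2 \<and> toS n P i j"
    define J' where "J' = j div n"
    define b' where "b' = j mod n"
    have Jb: "J' < n" "b' < n" "j = J'*n+b'" using dm2[of j n] j by (auto simp: J'_def b'_def)
    have e: "P I J' = (a+1, b'+1)" using toS_char[OF Ia(1,2) Jb(1,2), of P] j Ia Jb by simp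
    have "J' = J" using bj J e Jb unfolding bij_betw_def inj_on_def by auto
    then show "j = J*n+b" using e b Jb by simp
  qed
qed

lemma toS_col:
  assumes P: "P \<in> Pi_set n" and j: "j < n^2"
  shows "\<exists>!i. i < n^2 \<and> toS n P i j"
proof -
  define J where "J = j div n"
  define b where "b = j mod n"
  have Jb: "J < n" "b < n" "j = J*n+b" using dm2[OF j] by (auto simp: J_def b_def)
  have bj: "bij_betw (\<lambda>i. snd (P i J)) {0..<n} {1..n}" using P Jb unfolding Pi_set_def by auto
  then obtain I where I: "I < n" "snd (P I J) = b+1" using Jb
  proof -
    have "b+1 \<in> {1..n}" using Jb by auto
    then have "b+1 \<in> (\<lambda>i. snd (P i J)) ` {0..<n}" using bj unfolding bij_betw_def by simp
    then show ?thesis using that by auto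
  qed
  define a where "a = fst (P I J) - 1"
  have a: "a < n" "P I J = (a+1, b+1)" using Pi_facts[OF P I(1) Jb(1)] I by (auto simp: a_def)
  show ?thesis
  proof (rule ex1I[of _ "I*n+a"])
    show "I*n+a < n^2 \<and> toS n P (I*n+a) j" using toS_char[OF I(1) a(1) Jb(1,2)] a dm[OF I(1) a(1)] Jb by simp
  next
    fix i assume i: "i < n^2 \<and> toS n P i j"
    define I' where "I' = i div n"
    define a' where "a' = i mod n"
    have Ia: "I' < n" "a' < n" "i = I'*n+a'" using dm2[of i n] i by (auto simp: I'_def a'_def)
    have e: "P I' J = (a'+1, b+1)" using toS_char[OF Ia(1,2) Jb(1,2), of P] i Ia Jb by simp
    have "I' = I" using bj I e Ia unfolding bij_betw_def inj_on_def by auto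
    then show "i = I*n+a" using e a Ia by simp
  qed
qed

lemma toS_in:
  assumes P: "P \<in> Pi_set n"
  shows "toS n P \<in> Sigma_sq n"
proof -
  have pm: "perm_matrix (n^2) (toS n P)"
    unfolding perm_matrix_def using toS_rng toS_row[OF P] toS_col[OF P] by simp
  have bl: "\<exists>!p. fst p \<in> {I*n..<I*n+n} \<and> snd p \<in> {J*n..<J*n+n} \<and> toS n P (fst p) (snd p)"
    if IJ: "I < n" "J < n" for I J
  proof -
    define a where "a = fst (P I J) - 1"
    define b where "b = snd (P I J) - 1"
    have ab: "a < n" "b < n" "P I J = (a+1,b+1)" using Pi_facts[OF P IJ] by (auto simp: a_def b_def)
    show ?thesis
    proof (rule ex1I[of _ "(I*n+a, J*n+b)"])
      show "fst (I*n+a, J*n+b) \<in> {I*n..<I*n+n} \<and> snd (I*n+a, J*n+b) \<in> {J*n..<J*n+n} \<and> toS n P (fst (I*n+a, J*n+b)) (snd (I*n+a, J*n+b))"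
        using ab toS_char[OF IJ(1) ab(1) IJ(2) ab(2)] by simp
    next
      fix p assume p: "fst p \<in> {I*n..<I*n+n} \<and> snd p \<in> {J*n..<J*n+n} \<and> toS n P (fst p) (snd p)"
      have f: "fst p = I*n + fst p mod n" "fst p mod n < n" using blk[of "fst p" I n] p by auto
      have s: "snd p = J*n + snd p mod n" "snd p mod n < n" using blk[of "snd p" J n] p by auto
      have "P I J = (fst p mod n + 1, snd p mod n + 1)"
        using toS_char[OF IJ(1) f(2) IJ(2) s(2), of P] p f s by simp
      then show "p = (I*n+a, J*n+b)" using ab f s by (cases p) auto
    qed
  qed
  show ?thesis unfolding Sigma_sq_def using pm bl by blast
qed


lemma toS_inj: "inj_on (toS n) (Pi_set n)"
proof (rule inj_onI)
  fix P Q assume P: "P \<in> Pi_set n" and Q: "Q \<in> Pi_set n" and e: "toS n P = toS n Q"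
  show "P = Q"
  proof (rule ext, rule ext)
    fix I J
    show "P I J = Q I J"
    proof (cases "I < n \<and> J < n")
      case True
      define a where "a = fst (P I J) - 1"
      define b where "b = snd (P I J) - 1"
      have ab: "a < n" "b < n" "P I J = (a+1,b+1)" using Pi_facts[OF P] True by (auto simp: a_def b_def)
      have "toS n P (I*n+a) (J*n+b)" using toS_char[of I n a J b P] True ab by simp
      then have "toS n Q (I*n+a) (J*n+b)" using e by simp
      then have "Q I J = (a+1,b+1)" using toS_char[of I n a J b Q] True ab by simp
      then show ?thesis using ab by simp
    next
      case False
      then show ?thesis using P Q unfolding Pi_set_def by auto
    qed
  qed
qed

lemma toS_disj:
  assumes P: "P \<in> Pi_set n" and Q: "Q \<in> Pi_set n"
  shows "disjoint_Sigma (toS n P) (toS n Q) \<longleftrightarrow> disjoint_Pi n P Q"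
proof
  assume d: "disjoint_Sigma (toS n P) (toS n Q)"
  show "disjoint_Pi n P Q" unfolding disjoint_Pi_def
  proof (intro allI impI)
    fix I J assume IJ: "I < n" "J < n"
    show "P I J \<noteq> Q I J"
    proof
      assume eq: "P I J = Q I J"
      define a where "a = fst (P I J) - 1"
      define b where "b = snd (P I J) - 1"
      have ab: "a < n" "b < n" "P I J = (a+1,b+1)" using Pi_facts[OF P IJ] by (auto simp: a_def b_def)
      have "toS n P (I*n+a) (J*n+b)" "toS n Q (I*n+a) (J*n+b)"
        using toS_char[OF IJ(1) ab(1) IJ(2) ab(2)] ab eq by auto
      then show False using d unfolding disjoint_Sigma_def by blast
    qed
  qed
next
  assume d: "disjoint_Pi n P Q"
  show "disjoint_Sigma (toS n P) (toS n Q)" unfolding disjoint_Sigma_def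
  proof
    assume "\<exists>i j. toS n P i j \<and> toS n Q i j"
    then obtain i j where ij: "toS n P i j" "toS n Q i j" by blast
    then have r: "i < n^2" "j < n^2" by (auto simp: toS_def)
    have "i div n < n" "j div n < n" using dm2[OF r(1)] dm2[OF r(2)] by auto
    moreover have "P (i div n) (j div n) = Q (i div n) (j div n)" using ij by (simp add: toS_def)
    ultimately show False using d unfolding disjoint_Pi_def by blast
  qed
qed


lemma ex1_uniq:
  assumes u: "\<exists>!x. P x" and pa: "P a" and pb: "P b" shows "a = b"
proof -
  from u obtain x where x: "\<And>y. P y \<Longrightarrow> y = x" by (auto elim: ex1E)
  have "a = x" by (rule x[OF pa])
  moreover have "b = x" by (rule x[OF pb])
  ultimately show ?thesis by simp
qed

definition blkp :: "nat \<Rightarrow> (nat \<Rightarrow> nat \<Rightarrow> bool) \<Rightarrow> nat \<Rightarrow> nat \<Rightarrow> nat \<times> nat" where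
  "blkp n A I J = (THE p. fst p \<in> {I*n..<I*n+n} \<and> snd p \<in> {J*n..<J*n+n} \<and> A (fst p) (snd p))"

definition toP :: "nat \<Rightarrow> (nat \<Rightarrow> nat \<Rightarrow> bool) \<Rightarrow> nat \<Rightarrow> nat \<Rightarrow> nat \<times> nat" where
  "toP n A I J = (if I < n \<and> J < n then (fst (blkp n A I J) - I*n + 1, snd (blkp n A I J) - J*n + 1) else (0,0))"

lemma blkp_prop:
  assumes A: "A \<in> Sigma_sq n" and IJ: "I < n" "J < n"
  shows "fst (blkp n A I J) \<in> {I*n..<I*n+n} \<and> snd (blkp n A I J) \<in> {J*n..<J*n+n} \<and> A (fst (blkp n A I J)) (snd (blkp n A I J))"
    and "fst p \<in> {I*n..<I*n+n} \<Longrightarrow> snd p \<in> {J*n..<J*n+n} \<Longrightarrow> A (fst p) (snd p) \<Longrightarrow> p = blkp n A I J"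
proof -
  have u: "\<exists>!p. fst p \<in> {I*n..<I*n+n} \<and> snd p \<in> {J*n..<J*n+n} \<and> A (fst p) (snd p)"
    using A IJ by (simp add: Sigma_sq_def)
  show "fst (blkp n A I J) \<in> {I*n..<I*n+n} \<and> snd (blkp n A I J) \<in> {J*n..<J*n+n} \<and> A (fst (blkp n A I J)) (snd (blkp n A I J))"
    unfolding blkp_def by (rule theI'[OF u])
  then show "fst p \<in> {I*n..<I*n+n} \<Longrightarrow> snd p \<in> {J*n..<J*n+n} \<Longrightarrow> A (fst p) (snd p) \<Longrightarrow> p = blkp n A I J"
    using ex1_uniq[OF u, of p "blkp n A I J"] by simp
qed

lemma pm_rng: "perm_matrix N A \<Longrightarrow> A i j \<Longrightarrow> i < N \<and> j < N"
  unfolding perm_matrix_def by (elim conjE) simp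

lemma pm_row: "perm_matrix N A \<Longrightarrow> A i j \<Longrightarrow> A i j' \<Longrightarrow> j = j'"
proof -
  assume p: "perm_matrix N A" and a: "A i j" "A i j'"
  have r: "i < N" "j < N" "j' < N" using pm_rng[OF p a(1)] pm_rng[OF p a(2)] by auto
  have "\<forall>i<N. \<exists>!j. j < N \<and> A i j" using p unfolding perm_matrix_def by (elim conjE) assumption
  then have "\<exists>!j. j < N \<and> A i j" using r(1) by simp
  from ex1_uniq[OF this] show "j = j'" using a r by simp
qed

lemma pm_col: "perm_matrix N A \<Longrightarrow> A i j \<Longrightarrow> A i' j \<Longrightarrow> i = i'"
proof -
  assume p: "perm_matrix N A" and a: "A i j" "A i' j"
  have r: "i < N" "j < N" "i' < N" using pm_rng[OF p a(1)] pm_rng[OF p a(2)] by auto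
  have "\<forall>j<N. \<exists>!i. i < N \<and> A i j" using p unfolding perm_matrix_def by (elim conjE) assumption
  then have "\<exists>!i. i < N \<and> A i j" using r(2) by simp
  from ex1_uniq[OF this] show "i = i'" using a r by simp
qed

lemma toP_in:
  assumes A: "A \<in> Sigma_sq n"
  shows "toP n A \<in> Pi_set n"
proof -
  have pm: "perm_matrix (n^2) A" using A by (simp add: Sigma_sq_def)
  have rng: "fst (toP n A I J) \<in> {1..n} \<and> snd (toP n A I J) \<in> {1..n}" if IJ: "I < n" "J < n" for I J
    using blkp_prop(1)[OF A IJ] IJ unfolding toP_def by auto
  have row: "bij_betw (\<lambda>j. fst (toP n A I j)) {0..<n} {1..n}" if I: "I < n" for I
  proof (rule bij_card)
    show "(\<lambda>j. fst (toP n A I j)) ` {0..<n} \<subseteq> {1..n}" using rng I by auto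
    show "inj_on (\<lambda>j. fst (toP n A I j)) {0..<n}"
    proof (rule inj_onI)
      fix J1 J2 assume J1: "J1 \<in> {0..<n}" and J2: "J2 \<in> {0..<n}" and e: "fst (toP n A I J1) = fst (toP n A I J2)"
      have p1: "fst (blkp n A I J1) \<in> {I*n..<I*n+n}" "snd (blkp n A I J1) \<in> {J1*n..<J1*n+n}" "A (fst (blkp n A I J1)) (snd (blkp n A I J1))"
        using blkp_prop(1)[OF A I, of J1] J1 by auto
      have p2: "fst (blkp n A I J2) \<in> {I*n..<I*n+n}" "snd (blkp n A I J2) \<in> {J2*n..<J2*n+n}" "A (fst (blkp n A I J2)) (snd (blkp n A I J2))"
        using blkp_prop(1)[OF A I, of J2] J2 by auto
      have f: "fst (blkp n A I J1) = fst (blkp n A I J2)" using e p1 p2 I J1 J2 unfolding toP_def by auto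
      have "A (fst (blkp n A I J1)) (snd (blkp n A I J2))" using p2(3) f by simp
      from pm_row[OF pm p1(3) this] have "snd (blkp n A I J1) = snd (blkp n A I J2)" .
      then show "J1 = J2" using conjunct1[OF blk[OF p1(2)]] conjunct1[OF blk[OF p2(2)]] by (metis (no_types))
    qed
  qed
  have col: "bij_betw (\<lambda>i. snd (toP n A i J)) {0..<n} {1..n}" if J: "J < n" for J
  proof (rule bij_card)
    show "(\<lambda>i. snd (toP n A i J)) ` {0..<n} \<subseteq> {1..n}" using rng J by auto
    show "inj_on (\<lambda>i. snd (toP n A i J)) {0..<n}"
    proof (rule inj_onI)
      fix J1 J2 assume J1: "J1 \<in> {0..<n}" and J2: "J2 \<in> {0..<n}" and e: "snd (toP n A J1 J) = snd (toP n A J2 J)"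
      have p1: "fst (blkp n A J1 J) \<in> {J1*n..<J1*n+n}" "snd (blkp n A J1 J) \<in> {J*n..<J*n+n}" "A (fst (blkp n A J1 J)) (snd (blkp n A J1 J))"
        using blkp_prop(1)[OF A _ J, of J1] J1 by auto
      have p2: "fst (blkp n A J2 J) \<in> {J2*n..<J2*n+n}" "snd (blkp n A J2 J) \<in> {J*n..<J*n+n}" "A (fst (blkp n A J2 J)) (snd (blkp n A J2 J))"
        using blkp_prop(1)[OF A _ J, of J2] J2 by auto
      have f: "snd (blkp n A J1 J) = snd (blkp n A J2 J)" using e p1 p2 J J1 J2 unfolding toP_def by auto
      have "A (fst (blkp n A J2 J)) (snd (blkp n A J1 J))" using p2(3) f by simp
      from pm_col[OF pm p1(3) this] have "fst (blkp n A J1 J) = fst (blkp n A J2 J)" .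
      then show "J1 = J2" using conjunct1[OF blk[OF p1(1)]] conjunct1[OF blk[OF p2(1)]] by (metis (no_types))
    qed
  qed
  have out: "\<forall>i j. \<not> (i < n \<and> j < n) \<longrightarrow> toP n A i j = (0, 0)" by (simp add: toP_def)
  show ?thesis unfolding Pi_set_def mem_Collect_eq
  proof (intro conjI)
    show "\<forall>i<n. \<forall>j<n. fst (toP n A i j) \<in> {1..n} \<and> snd (toP n A i j) \<in> {1..n}"
      using rng by blast
    show "\<forall>i<n. bij_betw (\<lambda>j. fst (toP n A i j)) {0..<n} {1..n}" using row by blast
    show "\<forall>j<n. bij_betw (\<lambda>i. snd (toP n A i j)) {0..<n} {1..n}" using col by blast
  qed (rule out)
qed

lemma toS_toP:
  assumes A: "A \<in> Sigma_sq n"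
  shows "toS n (toP n A) = A"
proof (rule ext, rule ext)
  fix i j
  have pm: "perm_matrix (n^2) A" using A by (simp add: Sigma_sq_def)
  show "toS n (toP n A) i j = A i j"
  proof
    assume t: "toS n (toP n A) i j"
    then have r: "i < n^2" "j < n^2" by (auto simp: toS_def)
    define I where "I = i div n"
    define J where "J = j div n"
    have IJ: "I < n" "J < n" "i = I*n + i mod n" "j = J*n + j mod n" using dm2[OF r(1)] dm2[OF r(2)] by (auto simp: I_def J_def)
    have p: "fst (blkp n A I J) \<in> {I*n..<I*n+n}" "snd (blkp n A I J) \<in> {J*n..<J*n+n}" "A (fst (blkp n A I J)) (snd (blkp n A I J))"
      using blkp_prop(1)[OF A IJ(1,2)] by auto
    have "toP n A I J = (i mod n + 1, j mod n + 1)" using t by (simp add: toS_def I_def J_def)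
    then have "fst (blkp n A I J) - I*n = i mod n" "snd (blkp n A I J) - J*n = j mod n" using IJ(1,2) by (auto simp: toP_def)
    then have "fst (blkp n A I J) = I*n + i mod n" "snd (blkp n A I J) = J*n + j mod n" using p by auto
    then have "fst (blkp n A I J) = i" "snd (blkp n A I J) = j" using IJ(3,4) by simp_all
    then show "A i j" using p by simp
  next
    assume a: "A i j"
    then have r: "i < n^2" "j < n^2" using pm_rng[OF pm] by auto
    define I where "I = i div n"
    define J where "J = j div n"
    have IJ: "I < n" "J < n" "i = I*n + i mod n" "j = J*n + j mod n" "i mod n < n" "j mod n < n"
      using dm2[OF r(1)] dm2[OF r(2)] by (auto simp: I_def J_def)
    have "i \<in> {I*n..<I*n+n}" "j \<in> {J*n..<J*n+n}"
      using IJ(5,6) IJ(3,4)[symmetric] by (metis add_less_cancel_left atLeastLessThan_iff le_add1)+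
    then have "(i, j) = blkp n A I J" using blkp_prop(2)[OF A IJ(1,2), of "(i,j)"] a by auto
    then have "fst (blkp n A I J) - I*n = i mod n" "snd (blkp n A I J) - J*n = j mod n"
      using IJ(3,4) by (metis add_diff_cancel_left' fst_conv snd_conv)+
    then have "toP n A I J = (i mod n + 1, j mod n + 1)" using IJ(1,2) unfolding toP_def by simp
    then show "toS n (toP n A) i j" using r by (simp add: toS_def I_def J_def)
  qed
qed


theorem corollary3:
  fixes n :: nat
  assumes "n \<ge> 2"
  shows "card {(A, B). A \<in> Sigma_sq n \<and> B \<in> Sigma_sq n \<and> disjoint_Sigma A B}
       = card {(P, Q). P \<in> Pi_set n \<and> Q \<in> Pi_set n \<and> disjoint_Pi n P Q}"
proof -
  let ?S = "{(A, B). A \<in> Sigma_sq n \<and> B \<in> Sigma_sq n \<and> disjoint_Sigma A B}"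
  let ?T = "{(P, Q). P \<in> Pi_set n \<and> Q \<in> Pi_set n \<and> disjoint_Pi n P Q}"
  let ?f = "map_prod (toS n) (toS n)"
  have inj: "inj_on ?f ?T"
    by (rule inj_on_subset[OF map_prod_inj_on[OF toS_inj toS_inj]]) auto
  have eq: "?S = ?f ` ?T"
  proof
    show "?f ` ?T \<subseteq> ?S" using toS_in toS_disj by auto
  next
    show "?S \<subseteq> ?f ` ?T"
    proof
      fix x assume "x \<in> ?S"
      then obtain A B where x: "x = (A, B)" "A \<in> Sigma_sq n" "B \<in> Sigma_sq n" "disjoint_Sigma A B" by auto
      have pq: "toP n A \<in> Pi_set n" "toP n B \<in> Pi_set n" using toP_in x by auto
      have "disjoint_Pi n (toP n A) (toP n B)" using toS_disj[OF pq] x toS_toP by simp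
      then have "(toP n A, toP n B) \<in> ?T" using pq by simp
      moreover have "x = ?f (toP n A, toP n B)" using x toS_toP by simp
      ultimately show "x \<in> ?f ` ?T" by blast
    qed
  qed
  show ?thesis unfolding eq by (rule card_image[OF inj])
qed

end
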